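(* Let $\alpha,\beta$ be propositional formulas. If $\alpha\mathbin{|\!\sim}_{ow}\beta$, then there is a formula $\gamma$ with $V(\gamma)\subseteq V(\alpha)\cap V(\beta)$ such that $\alpha\mathbin{|\!\sim}_{ow}\gamma$ and $\gamma\vdash\beta$ in $\mathbf{HT}$.
   Context: $V(\varphi)$ is the set of atoms of $\varphi$. Here-and-there logic $\mathbf{HT}(V)$ over atom set $V$: interpretations are pairs $\langle H,T\rangle$, $H\subseteq T\subseteq V$, viewed as two-world Kripke models ($h\le t$; atoms true at $h$: $H$, at $t$: $T$) with intuitionistic Kripke clauses, $\neg\varphi:=\varphi\to\bot$; $\mathcal M\models\varphi$ iff $\varphi$ true at both worlds; $\Pi\vdash\varphi$ iff every $\mathbf{HT}$-model of $\Pi$ is a model of $\varphi$. An equilibrium model of $\Pi$ over $V$ is a model $\langle T,T\rangle$ of $\Pi$ in $\mathbf{HT}(V)$ with no model $\langle H,T\rangle$ of $\Pi$ with $H\subsetneq T$; $E_V(\Pi)$ is the set of these. Open-world equilibrium entailment: if $\Pi$ is non-empty and has equilibrium models, $\Pi\mathbin{|\!\sim}_{ow}\varphi$ iff $\mathcal M\models\varphi$ for every $\mathbf{HT}(V(\Pi)\cup V(\varphi))$-interpretation $\mathcal M$ whose restriction to $V(\Pi)$ belongs to $E_{V(\Pi)}(\Pi)$ (i.e., atoms outside $V(\Pi)$ are interpreted arbitrarily, with $H\subseteq T$); otherwise $\Pi\mathbin{|\!\sim}_{ow}\varphi$ iff $\Pi\vdash\varphi$. A formula $\alpha$ is identified with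 $\{\alpha\}$. *)

theory Defs
  imports Main
begin

datatype 'a fm = Atom 'a | Bot | And "'a fm" "'a fm" | Or "'a fm" "'a fm" | Imp "'a fm" "'a fm"

definition Neg :: "'a fm \<Rightarrow> 'a fm" where "Neg \<phi> = Imp \<phi> Bot"

fun atoms :: "'a fm \<Rightarrow> 'a set" where
  "atoms (Atom p) = {p}"
| "atoms Bot = {}"
| "atoms (And \<phi> \<psi>) = atoms \<phi> \<union> atoms \<psi>"
| "atoms (Or \<phi> \<psi>) = atoms \<phi> \<union> atoms \<psi>"
| "atoms (Imp \<phi> \<psi>) = atoms \<phi> \<union> atoms \<psi>"

definition atoms_set :: "'a fm set \<Rightarrow> 'a set" where
  "atoms_set \<Pi> = (\<Union>\<phi>\<in>\<Pi>. atoms \<phi>)"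

fun sat_t :: "'a set \<Rightarrow> 'a fm \<Rightarrow> bool" where
  "sat_t T (Atom p) = (p \<in> T)"
| "sat_t T Bot = False"
| "sat_t T (And \<phi> \<psi>) = (sat_t T \<phi> \<and> sat_t T \<psi>)"
| "sat_t T (Or \<phi> \<psi>) = (sat_t T \<phi> \<or> sat_t T \<psi>)"
| "sat_t T (Imp \<phi> \<psi>) = (sat_t T \<phi> \<longrightarrow> sat_t T \<psi>)"

text \<open>Truth at the world h (atoms H), Kripke clause for implication over h \<le> t.\<close>
fun sat_h :: "'a set \<Rightarrow> 'a set \<Rightarrow> 'a fm \<Rightarrow> bool" where
  "sat_h H T (Atom p) = (p \<in> H)"
| "sat_h H T Bot = False"
| "sat_h H T (And \<phi> \<psi>) = (sat_h H T \<phi> \<and> sat_h H T \<psi>)"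
| "sat_h H T (Or \<phi> \<psi>) = (sat_h H T \<phi> \<or> sat_h H T \<psi>)"
| "sat_h H T (Imp \<phi> \<psi>) = ((sat_h H T \<phi> \<longrightarrow> sat_h H T \<psi>) \<and> (sat_t T \<phi> \<longrightarrow> sat_t T \<psi>))"

definition ht_models :: "'a set \<Rightarrow> 'a set \<Rightarrow> 'a fm \<Rightarrow> bool" where
  "ht_models H T \<phi> \<longleftrightarrow> sat_h H T \<phi> \<and> sat_t T \<phi>"

definition ht_models_set :: "'a set \<Rightarrow> 'a set \<Rightarrow> 'a fm set \<Rightarrow> bool" where
  "ht_models_set H T \<Pi> \<longleftrightarrow> (\<forall>\<phi>\<in>\<Pi>. ht_models H T \<phi>)"

definition ht_entails :: "'a fm set \<Rightarrow> 'a fm \<Rightarrow> bool" where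
  "ht_entails \<Pi> \<phi> \<longleftrightarrow> (\<forall>H T. H \<subseteq> T \<longrightarrow> ht_models_set H T \<Pi> \<longrightarrow> ht_models H T \<phi>)"

text \<open>Equilibrium models over V, represented by their T (the model is <T,T>).\<close>
definition equilibrium_models :: "'a set \<Rightarrow> 'a fm set \<Rightarrow> 'a set set" where
  "equilibrium_models V \<Pi> = {T. T \<subseteq> V \<and> ht_models_set T T \<Pi> \<and>
      \<not> (\<exists>H. H \<subset> T \<and> ht_models_set H T \<Pi>)}"

definition ow_entails :: "'a fm set \<Rightarrow> 'a fm \<Rightarrow> bool" where
  "ow_entails \<Pi> \<phi> \<longleftrightarrow>
     (if \<Pi> \<noteq> {} \<and> equilibrium_models (atoms_set \<Pi>) \<Pi> \<noteq> {}
      then (\<forall>H T. H \<subseteq> T \<longrightarrow> T \<subseteq> atoms_set \<Pi> \<union> atoms \<phi> \<longrightarrow>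
              H \<inter> atoms_set \<Pi> = T \<inter> atoms_set \<Pi> \<longrightarrow>
              T \<inter> atoms_set \<Pi> \<in> equilibrium_models (atoms_set \<Pi>) \<Pi> \<longrightarrow>
              ht_models H T \<phi>)
      else ht_entails \<Pi> \<phi>)"

end

theory Submission
  imports Defs
begin

lemma agree:
  "atoms \<phi> \<subseteq> S \<Longrightarrow> T \<inter> S = T' \<inter> S \<Longrightarrow> H \<inter> S = H' \<inter> S \<Longrightarrow>
   (sat_t T \<phi> \<longleftrightarrow> sat_t T' \<phi>) \<and> (sat_h H T \<phi> \<longleftrightarrow> sat_h H' T' \<phi>)"
  by (induction \<phi>) auto

lemma agree_models:
  "atoms \<phi> \<subseteq> S \<Longrightarrow> T \<inter> S = T' \<inter> S \<Longrightarrow> H \<inter> S = H' \<inter> S \<Longrightarrow>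
   ht_models H T \<phi> \<longleftrightarrow> ht_models H' T' \<phi>"
  using agree unfolding ht_models_def by metis

lemma sat_hT: "sat_h T T \<phi> = sat_t T \<phi>"
  by (induction \<phi>) auto

fun Conj :: "'a fm list \<Rightarrow> 'a fm" where
  "Conj [] = Imp Bot Bot"
| "Conj (x # xs) = And x (Conj xs)"

fun Disj :: "'a fm list \<Rightarrow> 'a fm" where
  "Disj [] = Bot"
| "Disj (x # xs) = Or x (Disj xs)"

lemma Conj_sem: "sat_t T (Conj xs) = (\<forall>x\<in>set xs. sat_t T x)"
  "sat_h H T (Conj xs) = (\<forall>x\<in>set xs. sat_h H T x)"
  "atoms (Conj xs) = (\<Union>x\<in>set xs. atoms x)"
  by (induction xs) auto

lemma Disj_sem: "sat_t T (Disj xs) = (\<exists>x\<in>set xs. sat_t T x)"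
  "sat_h H T (Disj xs) = (\<exists>x\<in>set xs. sat_h H T x)"
  "atoms (Disj xs) = (\<Union>x\<in>set xs. atoms x)"
  by (induction xs) auto

definition lst :: "'b set \<Rightarrow> 'b list" where "lst S = (SOME xs. set xs = S)"

lemma set_lst: "finite S \<Longrightarrow> set (lst S) = S"
  unfolding lst_def by (rule someI_ex) (rule finite_list)

definition CS :: "'a fm set \<Rightarrow> 'a fm" where "CS F = Conj (lst F)"
definition DS :: "'a fm set \<Rightarrow> 'a fm" where "DS F = Disj (lst F)"

lemma CS_sem: "finite F \<Longrightarrow> sat_t T (CS F) = (\<forall>x\<in>F. sat_t T x)"
  "finite F \<Longrightarrow> sat_h H T (CS F) = (\<forall>x\<in>F. sat_h H T x)"
  "finite F \<Longrightarrow> atoms (CS F) = (\<Union>x\<in>F. atoms x)"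
  by (simp_all add: CS_def Conj_sem set_lst)

lemma DS_sem: "finite F \<Longrightarrow> sat_t T (DS F) = (\<exists>x\<in>F. sat_t T x)"
  "finite F \<Longrightarrow> sat_h H T (DS F) = (\<exists>x\<in>F. sat_h H T x)"
  "finite F \<Longrightarrow> atoms (DS F) = (\<Union>x\<in>F. atoms x)"
  by (simp_all add: DS_def Disj_sem set_lst)

definition psi :: "'a set \<Rightarrow> 'a set \<Rightarrow> 'a set \<Rightarrow> 'a fm" where
  "psi C A B = Imp (And (CS (Atom ` A)) (And (CS ((\<lambda>p. Neg (Atom p)) ` (C - B)))
       (CS ((\<lambda>q. Neg (Neg (Atom q))) ` (B - A))))) (DS (Atom ` (B - A)))"

lemma psi_atoms: "finite C \<Longrightarrow> A \<subseteq> B \<Longrightarrow> B \<subseteq> C \<Longrightarrow> atoms (psi C A B) \<subseteq> C"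
  unfolding psi_def
  by (auto simp: CS_sem DS_sem Neg_def finite_subset)

lemma psi_sem:
  assumes "finite C" "A \<subseteq> B" "B \<subseteq> C" "H \<subseteq> T"
  shows "ht_models H T (psi C A B) \<longleftrightarrow>
     \<not> ((A = B \<and> T \<inter> C = B) \<or> (H \<inter> C = A \<and> T \<inter> C = B))"
proof -
  have fA: "finite A" "finite B" using assms finite_subset by metis+
  have t: "sat_t T (psi C A B) \<longleftrightarrow> \<not> (A \<subseteq> T \<and> (C - B) \<inter> T = {} \<and> B - A \<subseteq> T) \<or> (B - A) \<inter> T \<noteq> {}"
    unfolding psi_def using fA assms by (auto simp: CS_sem DS_sem Neg_def)
  have h: "sat_h H T (psi C A B) \<longleftrightarrow> (\<not> (A \<subseteq> H \<and> (C - B) \<inter> T = {} \<and> B - A \<subseteq> T) \<or> (B - A) \<inter> H \<noteq> {})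
      \<and> sat_t T (psi C A B)"
    unfolding psi_def using fA assms by (auto simp: CS_sem DS_sem Neg_def)
  have p1: "(A \<subseteq> T \<and> (C - B) \<inter> T = {} \<and> B - A \<subseteq> T) \<longleftrightarrow> T \<inter> C = B" using assms by blast
  have p2: "(A \<subseteq> H \<and> (C - B) \<inter> T = {} \<and> B - A \<subseteq> T) \<longleftrightarrow> A \<subseteq> H \<and> T \<inter> C = B" using assms by blast
  have q1: "T \<inter> C = B \<Longrightarrow> (B - A) \<inter> T \<noteq> {} \<longleftrightarrow> A \<noteq> B" using assms by blast
  have q2: "T \<inter> C = B \<Longrightarrow> A \<subseteq> H \<Longrightarrow> (B - A) \<inter> H = {} \<longleftrightarrow> H \<inter> C = A" using assms by blast
  have q3: "H \<inter> C = A \<Longrightarrow> A \<subseteq> H" by blast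
  show ?thesis unfolding ht_models_def h t p1 p2
    using q1 q2 q3 by (cases "T \<inter> C = B"; cases "A \<subseteq> H") auto
qed

lemma define_set:
  assumes fin: "finite C"
    and cl: "\<And>A B. (A, B) \<in> M \<Longrightarrow> (B, B) \<in> M"
  shows "\<exists>\<gamma>. atoms \<gamma> \<subseteq> C \<and> (\<forall>H T. H \<subseteq> T \<longrightarrow> (ht_models H T \<gamma> \<longleftrightarrow> (H \<inter> C, T \<inter> C) \<in> M))"
proof -
  define X where "X = {(A, B). A \<subseteq> B \<and> B \<subseteq> C \<and> (A, B) \<notin> M}"
  have "X \<subseteq> Pow C \<times> Pow C" unfolding X_def by auto
  then have fX: "finite X" using fin by (meson finite_Pow_iff finite_SigmaI finite_subset)
  define \<gamma> where "\<gamma> = CS (case_prod (psi C) ` X)"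
  have fI: "finite (case_prod (psi C) ` X)" using fX by simp
  have "atoms \<gamma> \<subseteq> C"
    unfolding \<gamma>_def using fI psi_atoms[OF fin] by (auto simp: CS_sem X_def)
  moreover have "ht_models H T \<gamma> \<longleftrightarrow> (H \<inter> C, T \<inter> C) \<in> M" if "H \<subseteq> T" for H T
  proof -
    have "ht_models H T \<gamma> \<longleftrightarrow> (\<forall>(A,B)\<in>X. ht_models H T (psi C A B))"
      unfolding \<gamma>_def ht_models_def using fI by (auto simp: CS_sem)
    also have "\<dots> \<longleftrightarrow> (\<forall>(A,B)\<in>X. \<not> ((A = B \<and> T \<inter> C = B) \<or> (H \<inter> C = A \<and> T \<inter> C = B)))"
      using psi_sem[OF fin _ _ that] unfolding X_def by auto
    also have "\<dots> \<longleftrightarrow> (H \<inter> C, T \<inter> C) \<in> M"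
    proof
      assume a: "\<forall>(A,B)\<in>X. \<not> ((A = B \<and> T \<inter> C = B) \<or> (H \<inter> C = A \<and> T \<inter> C = B))"
      show "(H \<inter> C, T \<inter> C) \<in> M"
      proof (rule ccontr)
        assume "(H \<inter> C, T \<inter> C) \<notin> M"
        then have "(H \<inter> C, T \<inter> C) \<in> X" using that unfolding X_def by auto
        then show False using a by auto
      qed
    next
      assume m: "(H \<inter> C, T \<inter> C) \<in> M"
      then have m2: "(T \<inter> C, T \<inter> C) \<in> M" using cl by blast
      show "\<forall>(A,B)\<in>X. \<not> ((A = B \<and> T \<inter> C = B) \<or> (H \<inter> C = A \<and> T \<inter> C = B))"
        using m m2 unfolding X_def by auto
    qed
    finally show ?thesis .
  qed
  ultimately show ?thesis by blast
qed

lemma fin_atoms: "finite (atoms \<phi>)"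
  by (induction \<phi>) auto

theorem proposition5:
  fixes \<alpha> \<beta> :: "'a fm"
  assumes "ow_entails {\<alpha>} \<beta>"
  shows "\<exists>\<gamma>. atoms \<gamma> \<subseteq> atoms \<alpha> \<inter> atoms \<beta> \<and> ow_entails {\<alpha>} \<gamma> \<and> ht_entails {\<gamma>} \<beta>"
proof -
  define C where "C = atoms \<alpha> \<inter> atoms \<beta>"
  define Va where "Va = atoms \<alpha>"
  define Vb where "Vb = atoms \<beta>"
  have finC: "finite C" unfolding C_def using fin_atoms by blast
  have AS: "atoms_set {\<alpha>} = Va" unfolding atoms_set_def Va_def by simp
  define E where "E = equilibrium_models Va {\<alpha>}"
  show ?thesis
  proof (cases "E = {}")
    case False
    have ow: "\<And>H T. H \<subseteq> T \<Longrightarrow> T \<subseteq> Va \<union> Vb \<Longrightarrow> H \<inter> Va = T \<inter> Va \<Longrightarrow> T \<inter> Va \<in> E \<Longrightarrow> ht_models H T \<beta>"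
      using assms False unfolding ow_entails_def AS E_def Vb_def by auto
    define M where "M = {(T0 \<inter> C, T0 \<inter> C) | T0. T0 \<in> E}"
    obtain \<gamma> where g1: "atoms \<gamma> \<subseteq> C" and g2: "\<And>H T. H \<subseteq> T \<Longrightarrow> ht_models H T \<gamma> \<longleftrightarrow> (H \<inter> C, T \<inter> C) \<in> M"
    proof -
      have "\<And>A B. (A, B) \<in> M \<Longrightarrow> (B, B) \<in> M" unfolding M_def by auto
      then show ?thesis using define_set[OF finC, of M] that by blast
    qed
    have "ow_entails {\<alpha>} \<gamma>"
      unfolding ow_entails_def AS E_def[symmetric] using False
    proof (simp, intro allI impI)
      fix H T assume h: "H \<subseteq> T" "H \<inter> Va = T \<inter> Va" "T \<inter> Va \<in> E"
      have "C \<subseteq> Va" unfolding C_def Va_def by auto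
      then have "H \<inter> C = (T \<inter> Va) \<inter> C" "T \<inter> C = (T \<inter> Va) \<inter> C" using h by blast+
      then show "ht_models H T \<gamma>" using g2[OF h(1)] h(3) unfolding M_def by auto
    qed
    moreover have "ht_entails {\<gamma>} \<beta>"
      unfolding ht_entails_def ht_models_set_def
    proof (simp, intro allI impI)
      fix H T assume h: "H \<subseteq> T" "ht_models H T \<gamma>"
      then obtain T0 where t0: "T0 \<in> E" "H \<inter> C = T0 \<inter> C" "T \<inter> C = T0 \<inter> C"
        using g2 unfolding M_def by auto
      have T0V: "T0 \<subseteq> Va" using t0(1) unfolding E_def equilibrium_models_def by auto
      define H' where "H' = T0 \<union> ((H \<inter> Vb) - Va)"
      define T' where "T' = T0 \<union> ((T \<inter> Vb) - Va)"
      have e1: "H' \<subseteq> T'" using h(1) unfolding H'_def T'_def by blast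
      have e2: "T' \<subseteq> Va \<union> Vb" using T0V unfolding T'_def by blast
      have e3: "H' \<inter> Va = T0" "T' \<inter> Va = T0" using T0V unfolding H'_def T'_def by blast+
      have "ht_models H' T' \<beta>" using ow[OF e1 e2] e3 t0(1) by simp
      moreover have "T \<inter> Vb = T' \<inter> Vb" "H \<inter> Vb = H' \<inter> Vb"
        using t0 T0V unfolding H'_def T'_def C_def Va_def Vb_def by blast+
      ultimately show "ht_models H T \<beta>"
        using agree_models[of \<beta> Vb] unfolding Vb_def by blast
    qed
    ultimately show ?thesis using g1 unfolding C_def by blast
  next
    case True
    have he: "ht_entails {\<alpha>} \<beta>"
      using assms True unfolding ow_entails_def AS E_def by auto
    define M where "M = {(H \<inter> C, T \<inter> C) | H T. H \<subseteq> T \<and> ht_models H T \<alpha>}"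
    have cl: "\<And>A B. (A, B) \<in> M \<Longrightarrow> (B, B) \<in> M"
    proof -
      fix A B assume "(A, B) \<in> M"
      then obtain H T where "H \<subseteq> T" "ht_models H T \<alpha>" "A = H \<inter> C" "B = T \<inter> C"
        unfolding M_def by auto
      then have "ht_models T T \<alpha>" "B = T \<inter> C" by (auto simp: ht_models_def sat_hT)
      then show "(B, B) \<in> M" unfolding M_def by blast
    qed
    obtain \<gamma> where g1: "atoms \<gamma> \<subseteq> C" and g2: "\<And>H T. H \<subseteq> T \<Longrightarrow> ht_models H T \<gamma> \<longleftrightarrow> (H \<inter> C, T \<inter> C) \<in> M"
    proof -
      have "\<exists>\<gamma>. atoms \<gamma> \<subseteq> C \<and> (\<forall>H T. H \<subseteq> T \<longrightarrow> (ht_models H T \<gamma> \<longleftrightarrow> (H \<inter> C, T \<inter> C) \<in> M))"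
        by (rule define_set[OF finC]) (rule cl)
      then show ?thesis using that by blast
    qed
    have "ow_entails {\<alpha>} \<gamma>"
      unfolding ow_entails_def AS E_def[symmetric] using True
      by (auto simp: ht_entails_def ht_models_set_def g2 M_def)
    moreover have "ht_entails {\<gamma>} \<beta>"
      unfolding ht_entails_def ht_models_set_def
    proof (simp, intro allI impI)
      fix H T assume h: "H \<subseteq> T" "ht_models H T \<gamma>"
      then obtain H0 T0 where t0: "H0 \<subseteq> T0" "ht_models H0 T0 \<alpha>" "H \<inter> C = H0 \<inter> C" "T \<inter> C = T0 \<inter> C"
        using g2 unfolding M_def by auto
      define H' where "H' = (H0 \<inter> Va) \<union> (H - Va)"
      define T' where "T' = (T0 \<inter> Va) \<union> (T - Va)"
      have "ht_models H' T' \<alpha>"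
        using agree_models[of \<alpha> Va T0 T' H0 H'] t0(2) unfolding H'_def T'_def Va_def by blast
      moreover have "H' \<subseteq> T'" using h(1) t0(1) unfolding H'_def T'_def by blast
      ultimately have "ht_models H' T' \<beta>" using he unfolding ht_entails_def ht_models_set_def by auto
      moreover have "T \<inter> Vb = T' \<inter> Vb" "H \<inter> Vb = H' \<inter> Vb"
        using t0 unfolding H'_def T'_def C_def Va_def Vb_def by blast+
      ultimately show "ht_models H T \<beta>"
        using agree_models[of \<beta> Vb] unfolding Vb_def by blast
    qed
    ultimately show ?thesis using g1 unfolding C_def by blast
  qed
qed

end
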